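(* Assume $\mathcal M$ satisfies extensibility. Let $\lambda\in\mathbb R^A$, $\lambda>0$, and partition $A$ by equality of $\lambda_i$ into $S_1,\dots,S_d$ with $\lambda(S_1)<\dots<\lambda(S_d)$. Let $R\subseteq S_d$, let $\hat X$ be an optimal solution of $LP(\lambda)$ that is jointly optimal for $R$, and let $(\hat\alpha,\hat p)$ be an optimal solution of $DLP(\lambda)$. For $a>0$ let $\lambda'=\lambda+a\mathbf 1_R$. Then $\hat X$ is optimal for $LP(\lambda')$, and there exists an optimal solution $(\alpha',p')$ of $DLP(\lambda')$ such that: $p'_j\ge\hat p_j$ for all $j\in G$; $p'_j=\hat p_j$ for every $j$ with $\sum_{i\notin R}\hat x_{ij}>0$; and $\alpha'_{ik}=\hat\alpha_{ik}$ for all $i\notin R$ and all $k\in C$.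
   Context: A market $\mathcal M$: finite agent set $A$, finite goods set $G$ (supply $1$ each), finite index set $C$; agent $i$ has real coefficients $a_{ijk}$, requirements $r_{ik}\ge0$, delays $d_{ij}\ge0$. CC$(i)$: $\sum_ja_{ijk}x_{ij}\ge r_{ik}$ for all $k$, $x_{ij}\ge0$. An allocation $X\ge0$ is supply respecting if $\sum_ix_{ij}\le1$ for all $j$. For $S\subseteq A$, $X$ is jointly optimal for $S$ if it satisfies CC$(i)$ for all $i\in S$, is supply respecting, and minimizes $\sum_{i\in S}\sum_jd_{ij}x_{ij}$ among such allocations. Extensibility: for every $S\subset A$, every $X$ jointly optimal for $S$ and every $i\in A\setminus S$, there is $X'$ jointly optimal for $S\cup\{i\}$ with $\sum_jd_{i'j}x'_{i'j}=\sum_jd_{i'j}x_{i'j}$ for all $i'\in S$. $LP(\lambda)$: minimize $\sum_i\lambda_i\sum_jd_{ij}x_{ij}$ s.t. $\sum_ja_{ijk}x_{ij}\ge r_{ik}$ for all $(i,k)$, $\sum_ix_{ij}\le1$ for all $j$, $x\ge0$. $DLP(\lambda)$: maximize $\sum_{i,k}r_{ik}\alpha_{ik}-\sum_jp_j$ s.t. $\lambda_id_{ij}\ge\sum_ka_{ijk}\alpha_{ik}-p_j$ for all $(i,j)$, $\alpha,p\ge0$. $\lambda(S)$ is the common value of $\lambda_i$ on $S$; $\mathbf 1_R\in\{0,1\}^A$ is the indicator vector of $R$. *)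

theory Defs
  imports Main "HOL.Real"
begin

text \<open>Allocations are functions X :: agent => good => real (only values on A x G matter).\<close>

definition market :: "'a set \<Rightarrow> 'g set \<Rightarrow> 'c set \<Rightarrow> ('a \<Rightarrow> 'g \<Rightarrow> 'c \<Rightarrow> real)
   \<Rightarrow> ('a \<Rightarrow> 'c \<Rightarrow> real) \<Rightarrow> ('a \<Rightarrow> 'g \<Rightarrow> real) \<Rightarrow> bool" where
  "market A G C a r d \<longleftrightarrow> finite A \<and> finite G \<and> finite C \<and>
     (\<forall>i\<in>A. \<forall>k\<in>C. r i k \<ge> 0) \<and> (\<forall>i\<in>A. \<forall>j\<in>G. d i j \<ge> 0)"

definition CC :: "'g set \<Rightarrow> 'c set \<Rightarrow> ('a \<Rightarrow> 'g \<Rightarrow> 'c \<Rightarrow> real) \<Rightarrow> ('a \<Rightarrow> 'c \<Rightarrow> real)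
   \<Rightarrow> 'a \<Rightarrow> ('a \<Rightarrow> 'g \<Rightarrow> real) \<Rightarrow> bool" where
  "CC G C a r i X \<longleftrightarrow> (\<forall>k\<in>C. (\<Sum>j\<in>G. a i j k * X i j) \<ge> r i k) \<and> (\<forall>j\<in>G. X i j \<ge> 0)"

definition supply_respecting :: "'a set \<Rightarrow> 'g set \<Rightarrow> ('a \<Rightarrow> 'g \<Rightarrow> real) \<Rightarrow> bool" where
  "supply_respecting A G X \<longleftrightarrow> (\<forall>i\<in>A. \<forall>j\<in>G. X i j \<ge> 0) \<and> (\<forall>j\<in>G. (\<Sum>i\<in>A. X i j) \<le> 1)"

definition cost :: "'g set \<Rightarrow> ('a \<Rightarrow> 'g \<Rightarrow> real) \<Rightarrow> ('a \<Rightarrow> 'g \<Rightarrow> real) \<Rightarrow> 'a \<Rightarrow> real" where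
  "cost G d X i = (\<Sum>j\<in>G. d i j * X i j)"

definition feasible_for :: "'a set \<Rightarrow> 'g set \<Rightarrow> 'c set \<Rightarrow> ('a \<Rightarrow> 'g \<Rightarrow> 'c \<Rightarrow> real)
   \<Rightarrow> ('a \<Rightarrow> 'c \<Rightarrow> real) \<Rightarrow> 'a set \<Rightarrow> ('a \<Rightarrow> 'g \<Rightarrow> real) \<Rightarrow> bool" where
  "feasible_for A G C a r S X \<longleftrightarrow> (\<forall>i\<in>S. CC G C a r i X) \<and> supply_respecting A G X"

definition jointly_optimal :: "'a set \<Rightarrow> 'g set \<Rightarrow> 'c set \<Rightarrow> ('a \<Rightarrow> 'g \<Rightarrow> 'c \<Rightarrow> real)
   \<Rightarrow> ('a \<Rightarrow> 'c \<Rightarrow> real) \<Rightarrow> ('a \<Rightarrow> 'g \<Rightarrow> real) \<Rightarrow> 'a set \<Rightarrow> ('a \<Rightarrow> 'g \<Rightarrow> real) \<Rightarrow> bool" where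
  "jointly_optimal A G C a r d S X \<longleftrightarrow> feasible_for A G C a r S X \<and>
     (\<forall>Y. feasible_for A G C a r S Y \<longrightarrow> (\<Sum>i\<in>S. cost G d X i) \<le> (\<Sum>i\<in>S. cost G d Y i))"

definition extensible :: "'a set \<Rightarrow> 'g set \<Rightarrow> 'c set \<Rightarrow> ('a \<Rightarrow> 'g \<Rightarrow> 'c \<Rightarrow> real)
   \<Rightarrow> ('a \<Rightarrow> 'c \<Rightarrow> real) \<Rightarrow> ('a \<Rightarrow> 'g \<Rightarrow> real) \<Rightarrow> bool" where
  "extensible A G C a r d \<longleftrightarrow>
     (\<forall>S X i. S \<subset> A \<longrightarrow> jointly_optimal A G C a r d S X \<longrightarrow> i \<in> A - S \<longrightarrow>
        (\<exists>X'. jointly_optimal A G C a r d (insert i S) X' \<and>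
              (\<forall>i'\<in>S. cost G d X' i' = cost G d X i')))"

definition LP_obj :: "'a set \<Rightarrow> 'g set \<Rightarrow> ('a \<Rightarrow> 'g \<Rightarrow> real) \<Rightarrow> ('a \<Rightarrow> real)
   \<Rightarrow> ('a \<Rightarrow> 'g \<Rightarrow> real) \<Rightarrow> real" where
  "LP_obj A G d lam X = (\<Sum>i\<in>A. lam i * cost G d X i)"

definition LP_optimal :: "'a set \<Rightarrow> 'g set \<Rightarrow> 'c set \<Rightarrow> ('a \<Rightarrow> 'g \<Rightarrow> 'c \<Rightarrow> real)
   \<Rightarrow> ('a \<Rightarrow> 'c \<Rightarrow> real) \<Rightarrow> ('a \<Rightarrow> 'g \<Rightarrow> real) \<Rightarrow> ('a \<Rightarrow> real) \<Rightarrow> ('a \<Rightarrow> 'g \<Rightarrow> real) \<Rightarrow> bool" where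
  "LP_optimal A G C a r d lam X \<longleftrightarrow> feasible_for A G C a r A X \<and>
     (\<forall>Y. feasible_for A G C a r A Y \<longrightarrow> LP_obj A G d lam X \<le> LP_obj A G d lam Y)"

definition DLP_feasible :: "'a set \<Rightarrow> 'g set \<Rightarrow> 'c set \<Rightarrow> ('a \<Rightarrow> 'g \<Rightarrow> 'c \<Rightarrow> real)
   \<Rightarrow> ('a \<Rightarrow> 'g \<Rightarrow> real) \<Rightarrow> ('a \<Rightarrow> real) \<Rightarrow> ('a \<Rightarrow> 'c \<Rightarrow> real) \<Rightarrow> ('g \<Rightarrow> real) \<Rightarrow> bool" where
  "DLP_feasible A G C a d lam \<alpha> p \<longleftrightarrow>
     (\<forall>i\<in>A. \<forall>j\<in>G. lam i * d i j \<ge> (\<Sum>k\<in>C. a i j k * \<alpha> i k) - p j) \<and>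
     (\<forall>i\<in>A. \<forall>k\<in>C. \<alpha> i k \<ge> 0) \<and> (\<forall>j\<in>G. p j \<ge> 0)"

definition DLP_obj :: "'a set \<Rightarrow> 'g set \<Rightarrow> 'c set \<Rightarrow> ('a \<Rightarrow> 'c \<Rightarrow> real)
   \<Rightarrow> ('a \<Rightarrow> 'c \<Rightarrow> real) \<Rightarrow> ('g \<Rightarrow> real) \<Rightarrow> real" where
  "DLP_obj A G C r \<alpha> p = (\<Sum>i\<in>A. \<Sum>k\<in>C. r i k * \<alpha> i k) - (\<Sum>j\<in>G. p j)"

definition DLP_optimal :: "'a set \<Rightarrow> 'g set \<Rightarrow> 'c set \<Rightarrow> ('a \<Rightarrow> 'g \<Rightarrow> 'c \<Rightarrow> real)
   \<Rightarrow> ('a \<Rightarrow> 'c \<Rightarrow> real) \<Rightarrow> ('a \<Rightarrow> 'g \<Rightarrow> real) \<Rightarrow> ('a \<Rightarrow> real)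
   \<Rightarrow> ('a \<Rightarrow> 'c \<Rightarrow> real) \<Rightarrow> ('g \<Rightarrow> real) \<Rightarrow> bool" where
  "DLP_optimal A G C a r d lam \<alpha> p \<longleftrightarrow> DLP_feasible A G C a d lam \<alpha> p \<and>
     (\<forall>\<beta> q. DLP_feasible A G C a d lam \<beta> q \<longrightarrow> DLP_obj A G C r \<beta> q \<le> DLP_obj A G C r \<alpha> p)"

end

theory Submission
  imports Defs
begin


lemma farkas_aux:
  fixes A :: "'k \<Rightarrow> 'i \<Rightarrow> real" and b :: "'i \<Rightarrow> real"
  assumes "finite I" "finite K"
    and "\<forall>\<mu>. (\<forall>k\<in>K. \<mu> k \<ge> 0) \<longrightarrow> (\<exists>i\<in>I. b i \<noteq> (\<Sum>k\<in>K. \<mu> k * A k i))"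
  shows "\<exists>y. (\<forall>k\<in>K. (\<Sum>i\<in>I. y i * A k i) \<ge> 0) \<and> (\<Sum>i\<in>I. y i * b i) < 0"
  using assms(2,3)
proof (induction K arbitrary: A b rule: finite_induct)
  case empty
  then obtain i where i: "i \<in> I" "b i \<noteq> 0" by auto
  have "0 < (\<Sum>i\<in>I. b i * b i)"
    by (rule sum_pos2[OF assms(1) i(1)]) (use i in \<open>auto simp: zero_less_mult_iff linorder_neq_iff\<close>)
  then have "(\<Sum>i\<in>I. (- b i) * b i) < 0" by (simp add: sum_negf)
  then show ?case by (intro exI[of _ "\<lambda>i. - b i"]) simp
next
  case (insert m K)
  have nK: "\<forall>\<mu>. (\<forall>k\<in>K. \<mu> k \<ge> 0) \<longrightarrow> (\<exists>i\<in>I. b i \<noteq> (\<Sum>k\<in>K. \<mu> k * A k i))"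
  proof (intro allI impI)
    fix \<mu> :: "'k \<Rightarrow> real" assume mu: "\<forall>k\<in>K. \<mu> k \<ge> 0"
    let ?\<nu> = "\<mu>(m := 0)"
    have "\<forall>k\<in>insert m K. ?\<nu> k \<ge> 0" using mu by auto
    with insert.prems obtain i where "i\<in>I" "b i \<noteq> (\<Sum>k\<in>insert m K. ?\<nu> k * A k i)" by blast
    moreover have "(\<Sum>k\<in>insert m K. ?\<nu> k * A k i) = (\<Sum>k\<in>K. \<mu> k * A k i)"
      using insert.hyps by (simp add: sum.insert) (rule sum.cong, auto)
    ultimately show "\<exists>i\<in>I. b i \<noteq> (\<Sum>k\<in>K. \<mu> k * A k i)" by auto
  qed
  from insert.IH[OF nK] obtain y where
    y1: "\<forall>k\<in>K. (\<Sum>i\<in>I. y i * A k i) \<ge> 0" and y2: "(\<Sum>i\<in>I. y i * b i) < 0" by blast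
  define dt where "dt = (\<lambda>(z::'i \<Rightarrow> real) (v::'i \<Rightarrow> real). (\<Sum>i\<in>I. z i * v i))"
  have dtlin: "dt (\<lambda>i. p * z i + q * w i) v = p * dt z v + q * dt w v" for p q z w v
    unfolding dt_def by (simp add: sum.distrib sum_distrib_left algebra_simps)
  have dtlin2: "dt z (\<lambda>i. p * u i + q * w i) = p * dt z u + q * dt z w" for p q z w u
    unfolding dt_def by (simp add: sum.distrib sum_distrib_left algebra_simps)
  show ?case
  proof (cases "dt y (A m) \<ge> 0")
    case True
    then show ?thesis using y1 y2 unfolding dt_def by auto
  next
    case False
    define t where "t = dt y (A m)"
    have tneg: "t < 0" using False t_def by auto
    define A' where "A' = (\<lambda>k i. dt y (A k) * A m i - t * A k i)"
    define b' where "b' = (\<lambda>i. dt y b * A m i - t * b i)"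
    have nK': "\<forall>\<mu>. (\<forall>k\<in>K. \<mu> k \<ge> 0) \<longrightarrow> (\<exists>i\<in>I. b' i \<noteq> (\<Sum>k\<in>K. \<mu> k * A' k i))"
    proof (rule ccontr)
      assume "\<not> ?thesis"
      then obtain \<mu> where mu: "\<forall>k\<in>K. \<mu> k \<ge> 0" and eq: "\<forall>i\<in>I. b' i = (\<Sum>k\<in>K. \<mu> k * A' k i)" by blast
      define s where "s = (\<Sum>k\<in>K. \<mu> k * dt y (A k))"
      have s0: "s \<ge> 0" unfolding s_def using mu y1 unfolding dt_def by (intro sum_nonneg) auto
      define \<nu> where "\<nu> = \<mu>(m := (s - dt y b) / (- t))"
      have nu: "\<forall>k\<in>insert m K. \<nu> k \<ge> 0"
        using mu s0 tneg y2 unfolding \<nu>_def dt_def by (auto intro!: divide_nonneg_neg)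
      have "\<forall>i\<in>I. b i = (\<Sum>k\<in>insert m K. \<nu> k * A k i)"
      proof
        fix i assume i: "i \<in> I"
        have "b' i = (\<Sum>k\<in>K. \<mu> k * A' k i)" using eq i by auto
        also have "\<dots> = s * A m i - t * (\<Sum>k\<in>K. \<mu> k * A k i)"
          unfolding A'_def s_def by (simp add: sum_distrib_left sum_distrib_right sum_subtractf algebra_simps)
        finally have e: "dt y b * A m i - t * b i = s * A m i - t * (\<Sum>k\<in>K. \<mu> k * A k i)"
          unfolding b'_def .
        have "(\<Sum>k\<in>insert m K. \<nu> k * A k i) = (s - dt y b) / (- t) * A m i + (\<Sum>k\<in>K. \<mu> k * A k i)"
          using insert.hyps unfolding \<nu>_def by (simp add: sum.insert) (rule sum.cong, auto)
        also have "\<dots> = b i" using e tneg by (simp add: field_simps)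
        finally show "b i = (\<Sum>k\<in>insert m K. \<nu> k * A k i)" by simp
      qed
      with nu insert.prems show False by blast
    qed
    from insert.IH[OF nK'] obtain y' where
      y'1: "\<forall>k\<in>K. (\<Sum>i\<in>I. y' i * A' k i) \<ge> 0" and y'2: "(\<Sum>i\<in>I. y' i * b' i) < 0" by blast
    define y'' where "y'' = (\<lambda>i. dt y' (A m) * y i + (- t) * y' i)"
    have e1: "dt y'' v = dt y' (A m) * dt y v + (- t) * dt y' v" for v
      unfolding y''_def by (rule dtlin)
    have e2: "dt y' (A' k) = dt y (A k) * dt y' (A m) + (-t) * dt y' (A k)" for k
      unfolding A'_def using dtlin2[of y' "dt y (A k)" "A m" "-t" "A k"] by simp
    have e3: "dt y' b' = dt y b * dt y' (A m) + (-t) * dt y' b"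
      unfolding b'_def using dtlin2[of y' "dt y b" "A m" "-t" b] by simp
    have z1: "\<forall>k\<in>K. dt y' (A' k) \<ge> 0" using y'1 unfolding dt_def by simp
    have z2: "dt y' b' < 0" using y'2 unfolding dt_def by simp
    have r1: "\<forall>k\<in>K. dt y'' (A k) \<ge> 0"
    proof
      fix k assume "k \<in> K"
      then have "dt y' (A' k) \<ge> 0" using z1 by auto
      then show "dt y'' (A k) \<ge> 0" using e1[of "A k"] e2[of k] by (simp add: algebra_simps)
    qed
    have r2: "dt y'' b < 0" using e1[of b] e3 z2 by (simp add: algebra_simps)
    have r3: "dt y'' (A m) = 0" using e1[of "A m"] t_def by (simp add: algebra_simps)
    show ?thesis
      apply (rule exI[of _ y''])
      using r1 r2 r3 unfolding dt_def by auto
  qed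
qed



definition gen :: "('p \<Rightarrow> 'j \<Rightarrow> real) \<Rightarrow> ('p \<Rightarrow> real) \<Rightarrow> ('p + 'j option) \<Rightarrow> 'j option \<Rightarrow> real" where
  "gen M b k i = (case k of Inl \<rho> \<Rightarrow> (case i of None \<Rightarrow> b \<rho> | Some j \<Rightarrow> M \<rho> j)
     | Inr None \<Rightarrow> (case i of None \<Rightarrow> -1 | Some j \<Rightarrow> 0)
     | Inr (Some j') \<Rightarrow> (case i of None \<Rightarrow> 0 | Some j \<Rightarrow> if j = j' then 1 else 0))"

lemma sum_gen_Some:
  assumes "finite J" "finite P" "j \<in> J"
  shows "(\<Sum>k\<in>P <+> insert None (Some ` J). \<mu> k * gen M b k (Some j))
     = (\<Sum>\<rho>\<in>P. \<mu> (Inl \<rho>) * M \<rho> j) + \<mu> (Inr (Some j))"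
proof -
  have "(\<Sum>k\<in>P <+> insert None (Some ` J). \<mu> k * gen M b k (Some j))
     = (\<Sum>\<rho>\<in>P. \<mu> (Inl \<rho>) * M \<rho> j) + (\<Sum>j'\<in>J. \<mu> (Inr (Some j')) * (if j = j' then 1 else 0))"
    using assms by (simp add: sum.Plus sum.reindex gen_def)
  also have "(\<Sum>j'\<in>J. \<mu> (Inr (Some j')) * (if j = j' then 1 else 0)) = \<mu> (Inr (Some j))"
    using assms by (simp add: if_distrib cong: if_cong)
  finally show ?thesis .
qed

lemma sum_gen_None:
  assumes "finite J" "finite P"
  shows "(\<Sum>k\<in>P <+> insert None (Some ` J). \<mu> k * gen M b k None)
     = (\<Sum>\<rho>\<in>P. \<mu> (Inl \<rho>) * b \<rho>) - \<mu> (Inr None)"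
  using assms by (simp add: sum.Plus sum.reindex gen_def)

lemma dot_gen:
  assumes "finite J" "finite P"
  shows "(\<Sum>i\<in>insert None (Some ` J). z i * gen M b k i) =
     (case k of Inl \<rho> \<Rightarrow> z None * b \<rho> + (\<Sum>j\<in>J. z (Some j) * M \<rho> j)
       | Inr None \<Rightarrow> - z None
       | Inr (Some j') \<Rightarrow> (if j' \<in> J then z (Some j') else 0))"
  using assms by (auto simp: sum.reindex gen_def split: sum.split option.split simp: if_distrib cong: if_cong)

lemma lp_dual:
  fixes M :: "'p \<Rightarrow> 'j \<Rightarrow> real" and b :: "'p \<Rightarrow> real" and c :: "'j \<Rightarrow> real"
  assumes fin: "finite J" "finite P"
   and feas: "\<forall>\<rho>\<in>P. (\<Sum>j\<in>J. M \<rho> j * xz j) \<ge> b \<rho>" "\<forall>j\<in>J. xz j \<ge> 0"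
   and bound: "\<forall>x. (\<forall>\<rho>\<in>P. (\<Sum>j\<in>J. M \<rho> j * x j) \<ge> b \<rho>) \<longrightarrow> (\<forall>j\<in>J. x j \<ge> 0) \<longrightarrow> (\<Sum>j\<in>J. c j * x j) \<ge> v"
  shows "\<exists>y. (\<forall>\<rho>\<in>P. y \<rho> \<ge> 0) \<and> (\<forall>j\<in>J. (\<Sum>\<rho>\<in>P. y \<rho> * M \<rho> j) \<le> c j) \<and> (\<Sum>\<rho>\<in>P. b \<rho> * y \<rho>) \<ge> v"
proof (rule ccontr)
  assume nex: "\<not> ?thesis"
  define I where "I = insert None (Some ` J)"
  define K where "K = P <+> I"
  define tgt where "tgt = (\<lambda>i. case i of None \<Rightarrow> v | Some j \<Rightarrow> c j)"
  have finI: "finite I" "finite K" using fin unfolding I_def K_def by auto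
  have hyp: "\<forall>\<mu>. (\<forall>k\<in>K. \<mu> k \<ge> 0) \<longrightarrow> (\<exists>i\<in>I. tgt i \<noteq> (\<Sum>k\<in>K. \<mu> k * gen M b k i))"
  proof (intro allI impI, rule ccontr)
    fix \<mu> :: "'p + 'j option \<Rightarrow> real"
    assume mu: "\<forall>k\<in>K. \<mu> k \<ge> 0" and eq: "\<not> (\<exists>i\<in>I. tgt i \<noteq> (\<Sum>k\<in>K. \<mu> k * gen M b k i))"
    define y where "y = (\<lambda>\<rho>. \<mu> (Inl \<rho>))"
    have "\<forall>\<rho>\<in>P. y \<rho> \<ge> 0" using mu unfolding y_def K_def by auto
    moreover have "\<forall>j\<in>J. (\<Sum>\<rho>\<in>P. y \<rho> * M \<rho> j) \<le> c j"
    proof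
      fix j assume j: "j \<in> J"
      have "c j = (\<Sum>k\<in>K. \<mu> k * gen M b k (Some j))" using eq j unfolding I_def tgt_def by auto
      also have "\<dots> = (\<Sum>\<rho>\<in>P. y \<rho> * M \<rho> j) + \<mu> (Inr (Some j))"
        unfolding K_def I_def y_def using sum_gen_Some[OF fin j] .
      finally show "(\<Sum>\<rho>\<in>P. y \<rho> * M \<rho> j) \<le> c j" using mu j unfolding K_def I_def by auto
    qed
    moreover have "(\<Sum>\<rho>\<in>P. b \<rho> * y \<rho>) \<ge> v"
    proof -
      have "v = (\<Sum>k\<in>K. \<mu> k * gen M b k None)" using eq unfolding I_def tgt_def by auto
      also have "\<dots> = (\<Sum>\<rho>\<in>P. y \<rho> * b \<rho>) - \<mu> (Inr None)"
        unfolding K_def I_def y_def using sum_gen_None[OF fin] .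
      finally show ?thesis using mu unfolding K_def I_def by (auto simp: mult.commute)
    qed
    ultimately show False using nex by blast
  qed
  from farkas_aux[OF finI hyp] obtain z where
    z1: "\<forall>k\<in>K. (\<Sum>i\<in>I. z i * gen M b k i) \<ge> 0" and z2: "(\<Sum>i\<in>I. z i * tgt i) < 0" by blast
  define x where "x = (\<lambda>j. z (Some j))"
  define s where "s = - z None"
  have rows: "\<forall>\<rho>\<in>P. (\<Sum>j\<in>J. M \<rho> j * x j) \<ge> s * b \<rho>"
  proof
    fix \<rho> assume "\<rho> \<in> P"
    then have "(\<Sum>i\<in>I. z i * gen M b (Inl \<rho>) i) \<ge> 0" using z1 unfolding K_def by auto
    then show "(\<Sum>j\<in>J. M \<rho> j * x j) \<ge> s * b \<rho>"
      unfolding I_def dot_gen[OF fin] x_def s_def by (simp add: mult.commute)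
  qed
  have xnn: "\<forall>j\<in>J. x j \<ge> 0"
  proof
    fix j assume "j \<in> J"
    then have "(\<Sum>i\<in>I. z i * gen M b (Inr (Some j)) i) \<ge> 0" using z1 unfolding K_def I_def by auto
    then show "x j \<ge> 0" unfolding I_def dot_gen[OF fin] x_def using \<open>j \<in> J\<close> by simp
  qed
  have snn: "s \<ge> 0"
  proof -
    have "(\<Sum>i\<in>I. z i * gen M b (Inr None) i) \<ge> 0" using z1 unfolding K_def I_def by auto
    then show ?thesis unfolding I_def dot_gen[OF fin] s_def by simp
  qed
  have obj: "(\<Sum>j\<in>J. c j * x j) < s * v"
    using z2 fin unfolding I_def tgt_def x_def s_def by (simp add: sum.reindex mult.commute)
  show False
  proof (cases "s > 0")
    case True
    define x' where "x' = (\<lambda>j. x j / s)"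
    have "\<forall>\<rho>\<in>P. (\<Sum>j\<in>J. M \<rho> j * x' j) \<ge> b \<rho>"
    proof
      fix \<rho> assume "\<rho> \<in> P"
      have "(\<Sum>j\<in>J. M \<rho> j * x' j) = (\<Sum>j\<in>J. M \<rho> j * x j) / s"
        unfolding x'_def by (simp add: sum_divide_distrib)
      then show "(\<Sum>j\<in>J. M \<rho> j * x' j) \<ge> b \<rho>" using rows \<open>\<rho> \<in> P\<close> True
        by (simp add: pos_le_divide_eq mult.commute)
    qed
    moreover have "\<forall>j\<in>J. x' j \<ge> 0" using xnn True unfolding x'_def by auto
    ultimately have "(\<Sum>j\<in>J. c j * x' j) \<ge> v" using bound by blast
    moreover have "(\<Sum>j\<in>J. c j * x' j) = (\<Sum>j\<in>J. c j * x j) / s"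
      unfolding x'_def by (simp add: sum_divide_distrib)
    ultimately show False using obj True by (simp add: pos_le_divide_eq mult.commute)
  next
    case False
    with snn have s0: "s = 0" by auto
    define cx where "cx = (\<Sum>j\<in>J. c j * x j)"
    define c0 where "c0 = (\<Sum>j\<in>J. c j * xz j)"
    have cxneg: "cx < 0" using obj s0 unfolding cx_def by simp
    have v0: "c0 \<ge> v" using bound feas unfolding c0_def by blast
    define t where "t = (c0 - v + 1) / (- cx)"
    have ta: "c0 - v + 1 > 0" using v0 by linarith
    have tb: "- cx > 0" using cxneg by linarith
    have tpos: "t > 0" unfolding t_def using ta tb by (rule divide_pos_pos)
    have tcx: "t * cx = - (c0 - v + 1)" unfolding t_def using tb by (simp add: field_simps)
    define x1 where "x1 = (\<lambda>j. xz j + t * x j)"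
    have lin: "(\<Sum>j\<in>J. f j * x1 j) = (\<Sum>j\<in>J. f j * xz j) + t * (\<Sum>j\<in>J. f j * x j)" for f
      unfolding x1_def by (simp add: sum.distrib sum_distrib_left algebra_simps)
    have "\<forall>\<rho>\<in>P. (\<Sum>j\<in>J. M \<rho> j * x1 j) \<ge> b \<rho>"
    proof
      fix \<rho> assume r: "\<rho> \<in> P"
      have h1: "(\<Sum>j\<in>J. M \<rho> j * x j) \<ge> 0" using rows r s0 by auto
      have h2: "(\<Sum>j\<in>J. M \<rho> j * xz j) \<ge> b \<rho>" using feas r by auto
      have h3: "t * (\<Sum>j\<in>J. M \<rho> j * x j) \<ge> 0" using h1 tpos by simp
      show "(\<Sum>j\<in>J. M \<rho> j * x1 j) \<ge> b \<rho>" unfolding lin using h2 h3 by linarith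
    qed
    moreover have "\<forall>j\<in>J. x1 j \<ge> 0"
    proof
      fix j assume "j \<in> J"
      then have "xz j \<ge> 0" "x j \<ge> 0" using xnn feas by auto
      then show "x1 j \<ge> 0" unfolding x1_def using tpos by simp
    qed
    ultimately have "(\<Sum>j\<in>J. c j * x1 j) \<ge> v" using bound by blast
    then have "c0 + t * cx \<ge> v" unfolding lin c0_def cx_def .
    then show False using tcx by linarith
  qed
qed



lemma sumS1:
  fixes f :: "'g \<Rightarrow> real" and X :: "'a \<times> 'g \<Rightarrow> real"
  assumes "finite S" "finite G" "i \<in> S"
  shows "(\<Sum>p\<in>S \<times> G. (if fst p = i then f (snd p) else 0) * X p) = (\<Sum>j\<in>G. f j * X (i, j))"
proof -
  have "(\<Sum>p\<in>S \<times> G. (if fst p = i then f (snd p) else 0) * X p) =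
        (\<Sum>i'\<in>S. \<Sum>j\<in>G. (if i' = i then f j else 0) * X (i', j))"
    by (simp add: sum.cartesian_product case_prod_beta)
  also have "\<dots> = (\<Sum>i'\<in>S. if i' = i then (\<Sum>j\<in>G. f j * X (i', j)) else 0)"
    by (rule sum.cong) auto
  also have "\<dots> = (\<Sum>j\<in>G. f j * X (i, j))" using assms by simp
  finally show ?thesis .
qed

lemma sumS2:
  fixes X :: "'a \<times> 'g \<Rightarrow> real"
  assumes "finite S" "finite G" "j0 \<in> G"
  shows "(\<Sum>p\<in>S \<times> G. (if snd p = j0 then -1 else 0) * X p) = - (\<Sum>i\<in>S. X (i, j0))"
proof -
  have "(\<Sum>p\<in>S \<times> G. (if snd p = j0 then -1 else 0) * X p) =
        (\<Sum>i\<in>S. \<Sum>j\<in>G. (if j = j0 then -1 else 0) * X (i, j))"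
    by (simp add: sum.cartesian_product case_prod_beta)
  also have "\<dots> = (\<Sum>i\<in>S. \<Sum>j\<in>G. (if j = j0 then - X (i, j) else 0))"
    by (intro sum.cong) auto
  also have "\<dots> = (\<Sum>i\<in>S. - X (i, j0))"
    using assms by (simp add: sum.delta')
  finally show ?thesis by (simp add: sum_negf)
qed

lemma sumS3:
  fixes f :: "'c \<Rightarrow> real" and y :: "'a \<times> 'c \<Rightarrow> real"
  assumes "finite S" "finite C" "i \<in> S"
  shows "(\<Sum>p\<in>S \<times> C. y p * (if fst p = i then f (snd p) else 0)) = (\<Sum>k\<in>C. y (i, k) * f k)"
proof -
  have "(\<Sum>p\<in>S \<times> C. y p * (if fst p = i then f (snd p) else 0)) =
        (\<Sum>i'\<in>S. \<Sum>k\<in>C. y (i', k) * (if i' = i then f k else 0))"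
    by (simp add: sum.cartesian_product case_prod_beta)
  also have "\<dots> = (\<Sum>i'\<in>S. if i' = i then (\<Sum>k\<in>C. y (i', k) * f k) else 0)"
    by (rule sum.cong) auto
  also have "\<dots> = (\<Sum>k\<in>C. y (i, k) * f k)" using assms by simp
  finally show ?thesis .
qed

definition MM :: "('a \<Rightarrow> 'g \<Rightarrow> 'c \<Rightarrow> real) \<Rightarrow> ('a \<times> 'c) + 'g \<Rightarrow> 'a \<times> 'g \<Rightarrow> real" where
  "MM a \<rho> p = (case \<rho> of Inl ik \<Rightarrow> (if fst p = fst ik then a (fst p) (snd p) (snd ik) else 0)
      | Inr j0 \<Rightarrow> (if snd p = j0 then -1 else 0))"

definition BB :: "('a \<Rightarrow> 'c \<Rightarrow> real) \<Rightarrow> ('a \<times> 'c) + 'g \<Rightarrow> real" where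
  "BB r \<rho> = (case \<rho> of Inl ik \<Rightarrow> r (fst ik) (snd ik) | Inr j0 \<Rightarrow> -1)"

lemma market_dual:
  fixes a :: "'a \<Rightarrow> 'g \<Rightarrow> 'c \<Rightarrow> real" and r :: "'a \<Rightarrow> 'c \<Rightarrow> real" and cc :: "'a \<Rightarrow> 'g \<Rightarrow> real"
  assumes fin: "finite S" "finite G" "finite C" and HG: "H \<subseteq> G"
  and feas0: "\<forall>i\<in>S. \<forall>k\<in>C. (\<Sum>j\<in>G. a i j k * x0 i j) \<ge> r i k" "\<forall>i\<in>S. \<forall>j\<in>G. x0 i j \<ge> 0"
     "\<forall>j\<in>H. (\<Sum>i\<in>S. x0 i j) \<le> 1"
  and bound: "\<forall>x. (\<forall>i\<in>S. \<forall>k\<in>C. (\<Sum>j\<in>G. a i j k * x i j) \<ge> r i k) \<longrightarrow> (\<forall>i\<in>S. \<forall>j\<in>G. x i j \<ge> 0)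
      \<longrightarrow> (\<forall>j\<in>H. (\<Sum>i\<in>S. x i j) \<le> 1) \<longrightarrow> (\<Sum>i\<in>S. \<Sum>j\<in>G. cc i j * x i j) \<ge> v"
  shows "\<exists>\<alpha> q. (\<forall>i\<in>S. \<forall>k\<in>C. \<alpha> i k \<ge> 0) \<and> (\<forall>j\<in>H. q j \<ge> 0) \<and>
     (\<forall>i\<in>S. \<forall>j\<in>G. (\<Sum>k\<in>C. a i j k * \<alpha> i k) - (if j \<in> H then q j else 0) \<le> cc i j) \<and>
     (\<Sum>i\<in>S. \<Sum>k\<in>C. r i k * \<alpha> i k) - (\<Sum>j\<in>H. q j) \<ge> v"
proof -
  have finH: "finite H" using HG fin finite_subset by blast
  define J where "J = S \<times> G"
  define P where "P = (S \<times> C) <+> H"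
  have finJP: "finite J" "finite P" using fin finH unfolding J_def P_def by auto
  have rowL: "(\<Sum>p\<in>J. MM a (Inl (i, k)) p * X p) = (\<Sum>j\<in>G. a i j k * X (i, j))" if "i \<in> S" for i k X
  proof -
    have "(\<Sum>p\<in>J. MM a (Inl (i, k)) p * X p) = (\<Sum>p\<in>S \<times> G. (if fst p = i then a i (snd p) k else 0) * X p)"
      unfolding J_def MM_def by (intro sum.cong) auto
    then show ?thesis using sumS1[OF fin(1,2) that, of "\<lambda>j. a i j k" X] by simp
  qed
  have rowR: "(\<Sum>p\<in>J. MM a (Inr j0) p * X p) = - (\<Sum>i\<in>S. X (i, j0))" if "j0 \<in> H" for j0 X
    unfolding J_def MM_def using sumS2[OF fin(1,2), of j0 X] that HG by auto
  have feasP: "\<forall>\<rho>\<in>P. (\<Sum>p\<in>J. MM a \<rho> p * X p) \<ge> BB r \<rho>" if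
     h1: "\<forall>i\<in>S. \<forall>k\<in>C. (\<Sum>j\<in>G. a i j k * X (i, j)) \<ge> r i k" and h3: "\<forall>j\<in>H. (\<Sum>i\<in>S. X (i, j)) \<le> 1" for X
  proof
    fix \<rho> assume "\<rho> \<in> P"
    then consider (L) i k where "\<rho> = Inl (i, k)" "i \<in> S" "k \<in> C" | (R) j0 where "\<rho> = Inr j0" "j0 \<in> H"
      unfolding P_def by auto
    then show "(\<Sum>p\<in>J. MM a \<rho> p * X p) \<ge> BB r \<rho>"
    proof cases
      case L then show ?thesis using rowL[of i k X] h1 by (simp add: BB_def)
    next
      case R then show ?thesis using rowR[of j0 X] h3 by (simp add: BB_def)
    qed
  qed
  have "\<exists>y. (\<forall>\<rho>\<in>P. y \<rho> \<ge> 0) \<and> (\<forall>p\<in>J. (\<Sum>\<rho>\<in>P. y \<rho> * MM a \<rho> p) \<le> (\<lambda>(i, j). cc i j) p) \<and>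
      (\<Sum>\<rho>\<in>P. BB r \<rho> * y \<rho>) \<ge> v"
  proof (rule lp_dual[OF finJP, where xz = "\<lambda>(i, j). x0 i j"])
    show "\<forall>\<rho>\<in>P. (\<Sum>p\<in>J. MM a \<rho> p * (\<lambda>(i, j). x0 i j) p) \<ge> BB r \<rho>"
      using feasP[of "\<lambda>(i, j). x0 i j"] feas0 by simp
    show "\<forall>p\<in>J. (\<lambda>(i, j). x0 i j) p \<ge> 0" using feas0 unfolding J_def by auto
    show "\<forall>X. (\<forall>\<rho>\<in>P. (\<Sum>p\<in>J. MM a \<rho> p * X p) \<ge> BB r \<rho>) \<longrightarrow> (\<forall>p\<in>J. X p \<ge> 0) \<longrightarrow>
       (\<Sum>p\<in>J. (\<lambda>(i, j). cc i j) p * X p) \<ge> v"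
    proof (intro allI impI)
      fix X :: "'a \<times> 'g \<Rightarrow> real"
      assume r1: "\<forall>\<rho>\<in>P. (\<Sum>p\<in>J. MM a \<rho> p * X p) \<ge> BB r \<rho>" and r2: "\<forall>p\<in>J. X p \<ge> 0"
      define x where "x = (\<lambda>i j. X (i, j))"
      have "\<forall>i\<in>S. \<forall>k\<in>C. (\<Sum>j\<in>G. a i j k * x i j) \<ge> r i k"
      proof (intro ballI)
        fix i k assume "i \<in> S" "k \<in> C"
        then have "Inl (i, k) \<in> P" unfolding P_def by auto
        then show "(\<Sum>j\<in>G. a i j k * x i j) \<ge> r i k" using r1 rowL[OF \<open>i \<in> S\<close>, of k X]
          unfolding x_def by (force simp: BB_def)
      qed
      moreover have "\<forall>i\<in>S. \<forall>j\<in>G. x i j \<ge> 0" using r2 unfolding x_def J_def by auto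
      moreover have "\<forall>j\<in>H. (\<Sum>i\<in>S. x i j) \<le> 1"
      proof
        fix j assume "j \<in> H"
        then have "Inr j \<in> P" unfolding P_def by auto
        then show "(\<Sum>i\<in>S. x i j) \<le> 1" using r1 rowR[OF \<open>j \<in> H\<close>, of X]
          unfolding x_def by (force simp: BB_def)
      qed
      ultimately have "(\<Sum>i\<in>S. \<Sum>j\<in>G. cc i j * x i j) \<ge> v" using bound by blast
      then show "(\<Sum>p\<in>J. (\<lambda>(i, j). cc i j) p * X p) \<ge> v"
        unfolding J_def x_def by (simp add: sum.cartesian_product case_prod_beta)
    qed
  qed
  then obtain y where y1: "\<forall>\<rho>\<in>P. y \<rho> \<ge> 0"
    and y2: "\<forall>p\<in>J. (\<Sum>\<rho>\<in>P. y \<rho> * MM a \<rho> p) \<le> (\<lambda>(i, j). cc i j) p"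
    and y3: "(\<Sum>\<rho>\<in>P. BB r \<rho> * y \<rho>) \<ge> v" by blast
  define \<alpha> where "\<alpha> = (\<lambda>i k. y (Inl (i, k)))"
  define q where "q = (\<lambda>j. y (Inr j))"
  show ?thesis
  proof (intro exI conjI)
    show "\<forall>i\<in>S. \<forall>k\<in>C. \<alpha> i k \<ge> 0" using y1 unfolding \<alpha>_def P_def by auto
    show "\<forall>j\<in>H. q j \<ge> 0" using y1 unfolding q_def P_def by auto
    show "\<forall>i\<in>S. \<forall>j\<in>G. (\<Sum>k\<in>C. a i j k * \<alpha> i k) - (if j \<in> H then q j else 0) \<le> cc i j"
    proof (intro ballI)
      fix i j assume ij: "i \<in> S" "j \<in> G"
      have "(\<Sum>\<rho>\<in>P. y \<rho> * MM a \<rho> (i, j)) =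
         (\<Sum>p\<in>S \<times> C. y (Inl p) * (if fst p = i then a i j (snd p) else 0)) +
         (\<Sum>j0\<in>H. y (Inr j0) * (if j = j0 then -1 else 0))"
        unfolding P_def using fin finH by (simp add: sum.Plus MM_def case_prod_beta cong: if_cong) (intro sum.cong, auto)
      also have "\<dots> = (\<Sum>k\<in>C. a i j k * \<alpha> i k) - (if j \<in> H then q j else 0)"
        using sumS3[OF fin(1,3) ij(1), of "\<lambda>p. y (Inl p)" "\<lambda>k. a i j k"] finH
        unfolding \<alpha>_def q_def by (simp add: if_distrib mult.commute cong: if_cong)
      finally show "(\<Sum>k\<in>C. a i j k * \<alpha> i k) - (if j \<in> H then q j else 0) \<le> cc i j"
        using y2 ij unfolding J_def by force
    qed
    have "(\<Sum>\<rho>\<in>P. BB r \<rho> * y \<rho>) = (\<Sum>p\<in>S \<times> C. r (fst p) (snd p) * y (Inl p)) - (\<Sum>j\<in>H. q j)"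
      unfolding P_def q_def using fin finH by (simp add: sum.Plus BB_def sum_negf)
    also have "\<dots> = (\<Sum>i\<in>S. \<Sum>k\<in>C. r i k * \<alpha> i k) - (\<Sum>j\<in>H. q j)"
      unfolding \<alpha>_def by (simp add: sum.cartesian_product case_prod_beta)
    finally show "(\<Sum>i\<in>S. \<Sum>k\<in>C. r i k * \<alpha> i k) - (\<Sum>j\<in>H. q j) \<ge> v" using y3 by simp
  qed
qed



lemma agent_wd:
  fixes x :: "'g \<Rightarrow> real" and \<beta> :: "'c \<Rightarrow> real" and a :: "'g \<Rightarrow> 'c \<Rightarrow> real"
  assumes fin: "finite G" "finite C"
    and cc: "\<forall>k\<in>C. (\<Sum>j\<in>G. a j k * x j) \<ge> rr k" and xnn: "\<forall>j\<in>G. x j \<ge> 0"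
    and bnn: "\<forall>k\<in>C. \<beta> k \<ge> 0" and du: "\<forall>j\<in>G. (\<Sum>k\<in>C. a j k * \<beta> k) \<le> u j"
  shows "(\<Sum>k\<in>C. rr k * \<beta> k) \<le> (\<Sum>j\<in>G. u j * x j)"
proof -
  have "(\<Sum>k\<in>C. rr k * \<beta> k) \<le> (\<Sum>k\<in>C. (\<Sum>j\<in>G. a j k * x j) * \<beta> k)"
    using cc bnn by (intro sum_mono mult_right_mono) auto
  also have "\<dots> = (\<Sum>j\<in>G. (\<Sum>k\<in>C. a j k * \<beta> k) * x j)"
    by (simp add: sum_distrib_right sum_distrib_left sum.swap[of _ C G] algebra_simps)
  also have "\<dots> \<le> (\<Sum>j\<in>G. u j * x j)"
    using du xnn by (intro sum_mono mult_right_mono) auto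
  finally show ?thesis .
qed

lemma sum_if_restrict:
  fixes f :: "'a \<Rightarrow> real"
  assumes "finite A" "R \<subseteq> A"
  shows "(\<Sum>i\<in>A. if i \<in> R then f i else 0) = (\<Sum>i\<in>R. f i)"
proof -
  have "(\<Sum>i\<in>A. if i \<in> R then f i else 0) = (\<Sum>i\<in>A \<inter> R. f i)"
    using sum.inter_restrict[OF assms(1), of f R] by simp
  also have "A \<inter> R = R" using assms(2) by auto
  finally show ?thesis .
qed

lemma weak_duality:
  assumes mkt: "market A G C a r d"
    and X: "feasible_for A G C a r A X"
    and D: "DLP_feasible A G C a d lam \<beta> q"
  shows "DLP_obj A G C r \<beta> q \<le> LP_obj A G d lam X"
proof -
  have fin: "finite A" "finite G" "finite C" using mkt unfolding market_def by auto
  have xnn: "\<forall>i\<in>A. \<forall>j\<in>G. X i j \<ge> 0" and sup: "\<forall>j\<in>G. (\<Sum>i\<in>A. X i j) \<le> 1"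
    using X unfolding feasible_for_def supply_respecting_def by auto
  have each: "(\<Sum>k\<in>C. r i k * \<beta> i k) \<le> (\<Sum>j\<in>G. (lam i * d i j + q j) * X i j)" if i: "i \<in> A" for i
  proof (rule agent_wd[OF fin(2,3), where a = "\<lambda>j k. a i j k"])
    show "\<forall>k\<in>C. (\<Sum>j\<in>G. a i j k * X i j) \<ge> r i k" using X i unfolding feasible_for_def CC_def by auto
    show "\<forall>j\<in>G. X i j \<ge> 0" using xnn i by auto
    show "\<forall>k\<in>C. \<beta> i k \<ge> 0" using D i unfolding DLP_feasible_def by auto
    show "\<forall>j\<in>G. (\<Sum>k\<in>C. a i j k * \<beta> i k) \<le> lam i * d i j + q j" using D i unfolding DLP_feasible_def by force
  qed
  have "(\<Sum>i\<in>A. \<Sum>k\<in>C. r i k * \<beta> i k) \<le> (\<Sum>i\<in>A. \<Sum>j\<in>G. (lam i * d i j + q j) * X i j)"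
    using each by (rule sum_mono)
  also have "\<dots> = LP_obj A G d lam X + (\<Sum>j\<in>G. q j * (\<Sum>i\<in>A. X i j))"
    unfolding LP_obj_def cost_def
    by (simp add: algebra_simps sum.distrib sum_distrib_left sum.swap[of _ A G])
  also have "\<dots> \<le> LP_obj A G d lam X + (\<Sum>j\<in>G. q j)"
  proof -
    have "(\<Sum>j\<in>G. q j * (\<Sum>i\<in>A. X i j)) \<le> (\<Sum>j\<in>G. q j)"
      using D sup unfolding DLP_feasible_def by (intro sum_mono) (simp add: mult_left_le)
    then show ?thesis by simp
  qed
  finally show ?thesis unfolding DLP_obj_def by simp
qed



theorem lemma4p4:
  fixes A :: "'a set" and G :: "'g set" and C :: "'c set"
    and a :: "'a \<Rightarrow> 'g \<Rightarrow> 'c \<Rightarrow> real" and r :: "'a \<Rightarrow> 'c \<Rightarrow> real" and d :: "'a \<Rightarrow> 'g \<Rightarrow> real"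
    and lam :: "'a \<Rightarrow> real" and R :: "'a set"
    and Xh :: "'a \<Rightarrow> 'g \<Rightarrow> real" and \<alpha>h :: "'a \<Rightarrow> 'c \<Rightarrow> real" and ph :: "'g \<Rightarrow> real"
    and \<epsilon> :: real
  assumes mkt: "market A G C a r d"
    and ext: "extensible A G C a r d"
    and lam_pos: "\<forall>i\<in>A. lam i > 0"
    and R_top: "R \<subseteq> {i\<in>A. lam i = Max (lam ` A)}"
    and Xh_opt: "LP_optimal A G C a r d lam Xh"
    and Xh_joint: "jointly_optimal A G C a r d R Xh"
    and dual_opt: "DLP_optimal A G C a r d lam \<alpha>h ph"
    and eps_pos: "\<epsilon> > 0"
  shows "let lam' = (\<lambda>i. lam i + \<epsilon> * (if i \<in> R then 1 else 0)) in
           LP_optimal A G C a r d lam' Xh \<and>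
           (\<exists>\<alpha>' p'. DLP_optimal A G C a r d lam' \<alpha>' p' \<and>
              (\<forall>j\<in>G. p' j \<ge> ph j) \<and>
              (\<forall>j\<in>G. (\<Sum>i\<in>A - R. Xh i j) > 0 \<longrightarrow> p' j = ph j) \<and>
              (\<forall>i\<in>A - R. \<forall>k\<in>C. \<alpha>' i k = \<alpha>h i k))"
proof -
  define lam' where "lam' = (\<lambda>i. lam i + \<epsilon> * (if i \<in> R then 1 else 0))"
  have fin: "finite A" "finite G" "finite C" using mkt unfolding market_def by auto
  have RA: "R \<subseteq> A" using R_top by auto
  have finR: "finite R" using RA fin finite_subset by blast
  have XhF: "feasible_for A G C a r A Xh" using Xh_opt unfolding LP_optimal_def by auto
  have XhCC: "\<forall>i\<in>A. CC G C a r i Xh" using XhF unfolding feasible_for_def by auto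
  have Xhnn: "\<forall>i\<in>A. \<forall>j\<in>G. Xh i j \<ge> 0" and Xhsup: "\<forall>j\<in>G. (\<Sum>i\<in>A. Xh i j) \<le> 1"
    using XhF unfolding feasible_for_def supply_respecting_def by auto
  have Xhjo: "\<forall>Y. feasible_for A G C a r R Y \<longrightarrow> (\<Sum>i\<in>R. cost G d Xh i) \<le> (\<Sum>i\<in>R. cost G d Y i)"
    using Xh_joint unfolding jointly_optimal_def by auto
  have dfeas: "DLP_feasible A G C a d lam \<alpha>h ph" using dual_opt unfolding DLP_optimal_def by auto
  have lamobj: "LP_obj A G d lam' X = LP_obj A G d lam X + \<epsilon> * (\<Sum>i\<in>R. cost G d X i)" for X
  proof -
    have "LP_obj A G d lam' X = (\<Sum>i\<in>A. lam i * cost G d X i + (if i \<in> R then \<epsilon> * cost G d X i else 0))"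
      unfolding LP_obj_def lam'_def by (intro sum.cong) (auto simp: algebra_simps)
    also have "\<dots> = LP_obj A G d lam X + (\<Sum>i\<in>A. if i \<in> R then \<epsilon> * cost G d X i else 0)"
      unfolding LP_obj_def by (simp add: sum.distrib)
    also have "(\<Sum>i\<in>A. if i \<in> R then \<epsilon> * cost G d X i else 0) = \<epsilon> * (\<Sum>i\<in>R. cost G d X i)"
      using sum_if_restrict[OF fin(1) RA, of "\<lambda>i. \<epsilon> * cost G d X i"] by (simp add: sum_distrib_left)
    finally show ?thesis .
  qed
  have part1: "LP_optimal A G C a r d lam' Xh"
    unfolding LP_optimal_def
  proof (intro conjI allI impI)
    show "feasible_for A G C a r A Xh" by (rule XhF)
    fix Y assume Y: "feasible_for A G C a r A Y"
    then have "feasible_for A G C a r R Y" using RA unfolding feasible_for_def by auto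
    then have "(\<Sum>i\<in>R. cost G d Xh i) \<le> (\<Sum>i\<in>R. cost G d Y i)" using Xhjo by auto
    moreover have "LP_obj A G d lam Xh \<le> LP_obj A G d lam Y" using Xh_opt Y unfolding LP_optimal_def by auto
    ultimately show "LP_obj A G d lam' Xh \<le> LP_obj A G d lam' Y"
      unfolding lamobj using eps_pos by (simp add: add_mono)
  qed
  have SD: "DLP_obj A G C r \<alpha>h ph \<ge> LP_obj A G d lam Xh"
  proof -
    have "\<exists>\<alpha> q. (\<forall>i\<in>A. \<forall>k\<in>C. \<alpha> i k \<ge> 0) \<and> (\<forall>j\<in>G. q j \<ge> 0) \<and>
     (\<forall>i\<in>A. \<forall>j\<in>G. (\<Sum>k\<in>C. a i j k * \<alpha> i k) - (if j \<in> G then q j else 0) \<le> lam i * d i j) \<and>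
     (\<Sum>i\<in>A. \<Sum>k\<in>C. r i k * \<alpha> i k) - (\<Sum>j\<in>G. q j) \<ge> LP_obj A G d lam Xh"
    proof (rule market_dual[OF fin order_refl])
      show "\<forall>i\<in>A. \<forall>k\<in>C. (\<Sum>j\<in>G. a i j k * Xh i j) \<ge> r i k" using XhCC unfolding CC_def by auto
      show "\<forall>i\<in>A. \<forall>j\<in>G. Xh i j \<ge> 0" by (rule Xhnn)
      show "\<forall>j\<in>G. (\<Sum>i\<in>A. Xh i j) \<le> 1" by (rule Xhsup)
      show "\<forall>x. (\<forall>i\<in>A. \<forall>k\<in>C. (\<Sum>j\<in>G. a i j k * x i j) \<ge> r i k) \<longrightarrow> (\<forall>i\<in>A. \<forall>j\<in>G. x i j \<ge> 0)
        \<longrightarrow> (\<forall>j\<in>G. (\<Sum>i\<in>A. x i j) \<le> 1) \<longrightarrow> (\<Sum>i\<in>A. \<Sum>j\<in>G. lam i * d i j * x i j) \<ge> LP_obj A G d lam Xh"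
      proof (intro allI impI)
        fix x assume h1: "\<forall>i\<in>A. \<forall>k\<in>C. (\<Sum>j\<in>G. a i j k * x i j) \<ge> r i k"
          and h2: "\<forall>i\<in>A. \<forall>j\<in>G. x i j \<ge> 0" and h3: "\<forall>j\<in>G. (\<Sum>i\<in>A. x i j) \<le> 1"
        have "feasible_for A G C a r A x"
          using h1 h2 h3 unfolding feasible_for_def CC_def supply_respecting_def by auto
        then have "LP_obj A G d lam Xh \<le> LP_obj A G d lam x" using Xh_opt unfolding LP_optimal_def by auto
        also have "LP_obj A G d lam x = (\<Sum>i\<in>A. \<Sum>j\<in>G. lam i * d i j * x i j)"
          unfolding LP_obj_def cost_def by (simp add: sum_distrib_left mult.assoc)
        finally show "(\<Sum>i\<in>A. \<Sum>j\<in>G. lam i * d i j * x i j) \<ge> LP_obj A G d lam Xh" .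
      qed
    qed
    then obtain \<alpha>0 q0 where a0: "\<forall>i\<in>A. \<forall>k\<in>C. \<alpha>0 i k \<ge> 0" and q0: "\<forall>j\<in>G. q0 j \<ge> 0"
      and c0: "\<forall>i\<in>A. \<forall>j\<in>G. (\<Sum>k\<in>C. a i j k * \<alpha>0 i k) - (if j \<in> G then q0 j else 0) \<le> lam i * d i j"
      and o0: "(\<Sum>i\<in>A. \<Sum>k\<in>C. r i k * \<alpha>0 i k) - (\<Sum>j\<in>G. q0 j) \<ge> LP_obj A G d lam Xh" by blast
    have "DLP_feasible A G C a d lam \<alpha>0 q0"
      unfolding DLP_feasible_def using a0 q0 c0 by auto
    then have "DLP_obj A G C r \<alpha>0 q0 \<le> DLP_obj A G C r \<alpha>h ph" using dual_opt unfolding DLP_optimal_def by auto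
    then show ?thesis using o0 unfolding DLP_obj_def by simp
  qed
  define J0 where "J0 = {j\<in>G. (\<Sum>i\<in>A - R. Xh i j) > 0}"
  define H where "H = G - J0"
  have HG: "H \<subseteq> G" unfolding H_def by auto
  have finJ0: "finite J0" using fin unfolding J0_def by auto
  have splitA: "(\<Sum>i\<in>A. f i) = (\<Sum>i\<in>A - R. f i) + (\<Sum>i\<in>R. f i)" for f :: "'a \<Rightarrow> real"
    using sum.subset_diff[OF RA fin(1)] by simp
  have sR_le: "(\<Sum>i\<in>R. Xh i j) \<le> 1" if "j \<in> G" for j
  proof -
    have "(\<Sum>i\<in>A - R. Xh i j) \<ge> 0" using Xhnn that by (intro sum_nonneg) auto
    then show ?thesis using splitA[of "\<lambda>i. Xh i j"] Xhsup that by auto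
  qed
  have sR_lt: "(\<Sum>i\<in>R. Xh i j) < 1" if "j \<in> J0" for j
    using splitA[of "\<lambda>i. Xh i j"] Xhsup that unfolding J0_def by auto
  have local: "(\<Sum>i\<in>R. cost G d Xh i) \<le> (\<Sum>i\<in>R. \<Sum>j\<in>G. d i j * x i j)"
    if h1: "\<forall>i\<in>R. \<forall>k\<in>C. (\<Sum>j\<in>G. a i j k * x i j) \<ge> r i k" and h2: "\<forall>i\<in>R. \<forall>j\<in>G. x i j \<ge> 0"
      and h3: "\<forall>j\<in>H. (\<Sum>i\<in>R. x i j) \<le> 1" for x
  proof -
    define s where "s = (\<lambda>j. \<Sum>i\<in>R. Xh i j)"
    define X where "X = (\<lambda>j. \<Sum>i\<in>R. x i j)"
    define \<delta> where "\<delta> = Min (insert 1 ((\<lambda>j. 1 - s j) ` J0))"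
    define Mx where "Mx = 1 + (\<Sum>j\<in>G. X j)"
    define t where "t = \<delta> / Mx"
    have Xnn: "X j \<ge> 0" if "j \<in> G" for j using h2 that unfolding X_def by (intro sum_nonneg) auto
    have snn: "s j \<ge> 0" if "j \<in> G" for j using Xhnn RA that unfolding s_def by (intro sum_nonneg) auto
    have finD: "finite (insert 1 ((\<lambda>j. 1 - s j) ` J0))" using finJ0 by auto
    have dpos: "\<delta> > 0" unfolding \<delta>_def using finD sR_lt unfolding s_def by (auto simp: Min_gr_iff)
    have dle1: "\<delta> \<le> 1" unfolding \<delta>_def using finD by (intro Min_le) auto
    have dleJ: "\<delta> \<le> 1 - s j" if "j \<in> J0" for j unfolding \<delta>_def using finD that by (intro Min_le) auto
    have sumX: "(\<Sum>j\<in>G. X j) \<ge> 0" using Xnn by (intro sum_nonneg) auto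
    have Mx1: "Mx \<ge> 1" unfolding Mx_def using sumX by simp
    have XleM: "X j \<le> Mx" if "j \<in> G" for j
    proof -
      have "X j \<le> (\<Sum>j\<in>G. X j)" using Xnn that fin(2) by (intro member_le_sum) auto
      then show ?thesis unfolding Mx_def by simp
    qed
    have tpos: "t > 0" unfolding t_def using dpos Mx1 by simp
    have tle1: "t \<le> 1" unfolding t_def using dle1 Mx1 by (simp add: divide_le_eq_1)
    define Y where "Y = (\<lambda>i j. if i \<in> R then (1 - t) * Xh i j + t * x i j else 0)"
    have YF: "feasible_for A G C a r R Y"
      unfolding feasible_for_def supply_respecting_def CC_def
    proof (intro conjI ballI)
      fix i k assume i: "i \<in> R" and k: "k \<in> C"
      have "(\<Sum>j\<in>G. a i j k * Y i j) = (1 - t) * (\<Sum>j\<in>G. a i j k * Xh i j) + t * (\<Sum>j\<in>G. a i j k * x i j)"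
      proof -
        have "(\<Sum>j\<in>G. a i j k * Y i j) = (\<Sum>j\<in>G. (1 - t) * (a i j k * Xh i j) + t * (a i j k * x i j))"
          unfolding Y_def using i by (intro sum.cong) (auto simp: algebra_simps)
        then show ?thesis by (simp add: sum.distrib sum_distrib_left)
      qed
      moreover have "(\<Sum>j\<in>G. a i j k * Xh i j) \<ge> r i k" using XhCC i k RA unfolding CC_def by auto
      moreover have "(\<Sum>j\<in>G. a i j k * x i j) \<ge> r i k" using h1 i k by auto
      ultimately show "(\<Sum>j\<in>G. a i j k * Y i j) \<ge> r i k"
      proof -
        assume e: "(\<Sum>j\<in>G. a i j k * Y i j) = (1 - t) * (\<Sum>j\<in>G. a i j k * Xh i j) + t * (\<Sum>j\<in>G. a i j k * x i j)"
          and u: "(\<Sum>j\<in>G. a i j k * Xh i j) \<ge> r i k" and w: "(\<Sum>j\<in>G. a i j k * x i j) \<ge> r i k"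
        have "(1 - t) * r i k \<le> (1 - t) * (\<Sum>j\<in>G. a i j k * Xh i j)" using u tle1 by (intro mult_left_mono) auto
        moreover have "t * r i k \<le> t * (\<Sum>j\<in>G. a i j k * x i j)" using w tpos by (intro mult_left_mono) auto
        ultimately show ?thesis using e by (simp add: algebra_simps)
      qed
    next
      fix i j assume i: "i \<in> R" and j: "j \<in> G"
      show "Y i j \<ge> 0" unfolding Y_def using i j Xhnn RA h2 tpos tle1 by auto
    next
      fix i j assume i: "i \<in> A" and j: "j \<in> G"
      show "Y i j \<ge> 0" unfolding Y_def using i j Xhnn RA h2 tpos tle1 by auto
    next
      fix j assume j: "j \<in> G"
      have "(\<Sum>i\<in>A. Y i j) = (\<Sum>i\<in>R. (1 - t) * Xh i j + t * x i j)"
        unfolding Y_def by (rule sum_if_restrict[OF fin(1) RA])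
      also have "\<dots> = (1 - t) * s j + t * X j"
        unfolding s_def X_def by (simp add: sum.distrib sum_distrib_left)
      also have "\<dots> \<le> 1"
      proof (cases "j \<in> J0")
        case True
        have "t * X j = \<delta> * (X j / Mx)" unfolding t_def by simp
        also have "\<dots> \<le> \<delta> * 1" using XleM[OF j] Mx1 dpos Xnn[OF j]
          by (intro mult_left_mono) (auto simp: divide_le_eq_1)
        finally have "t * X j \<le> 1 - s j" using dleJ[OF True] by simp
        moreover have "(1 - t) * s j \<le> s j" using snn[OF j] tpos by (simp add: algebra_simps)
        ultimately show ?thesis by simp
      next
        case False
        then have "j \<in> H" unfolding H_def using j by auto
        then have "X j \<le> 1" using h3 unfolding X_def by auto
        moreover have "s j \<le> 1" using sR_le[OF j] unfolding s_def .
        ultimately show ?thesis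
        proof -
          assume u: "X j \<le> 1" and w: "s j \<le> 1"
          have "(1 - t) * s j \<le> (1 - t) * 1" using w tle1 by (intro mult_left_mono) auto
          moreover have "t * X j \<le> t * 1" using u tpos by (intro mult_left_mono) auto
          ultimately show ?thesis by simp
        qed
      qed
      finally show "(\<Sum>i\<in>A. Y i j) \<le> 1" .
    qed
    have "(\<Sum>i\<in>R. cost G d Xh i) \<le> (\<Sum>i\<in>R. cost G d Y i)" using Xhjo YF by auto
    also have "(\<Sum>i\<in>R. cost G d Y i) = (1 - t) * (\<Sum>i\<in>R. cost G d Xh i) + t * (\<Sum>i\<in>R. \<Sum>j\<in>G. d i j * x i j)"
    proof -
      have "(\<Sum>i\<in>R. cost G d Y i) = (\<Sum>i\<in>R. (1 - t) * cost G d Xh i + t * (\<Sum>j\<in>G. d i j * x i j))"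
      proof (intro sum.cong refl)
        fix i assume i: "i \<in> R"
        have "cost G d Y i = (\<Sum>j\<in>G. (1 - t) * (d i j * Xh i j) + t * (d i j * x i j))"
          unfolding cost_def Y_def using i by (intro sum.cong) (auto simp: algebra_simps)
        then show "cost G d Y i = (1 - t) * cost G d Xh i + t * (\<Sum>j\<in>G. d i j * x i j)"
          unfolding cost_def by (simp add: sum.distrib sum_distrib_left)
      qed
      then show ?thesis by (simp add: sum.distrib sum_distrib_left)
    qed
    finally have "t * (\<Sum>i\<in>R. cost G d Xh i) \<le> t * (\<Sum>i\<in>R. \<Sum>j\<in>G. d i j * x i j)"
      by (simp add: algebra_simps)
    then show ?thesis using tpos by simp
  qed
  have "\<exists>\<alpha> q. (\<forall>i\<in>R. \<forall>k\<in>C. \<alpha> i k \<ge> 0) \<and> (\<forall>j\<in>H. q j \<ge> 0) \<and>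
     (\<forall>i\<in>R. \<forall>j\<in>G. (\<Sum>k\<in>C. a i j k * \<alpha> i k) - (if j \<in> H then q j else 0) \<le> (lam i + \<epsilon>) * d i j + ph j) \<and>
     (\<Sum>i\<in>R. \<Sum>k\<in>C. r i k * \<alpha> i k) - (\<Sum>j\<in>H. q j) \<ge>
        (\<Sum>i\<in>R. \<Sum>k\<in>C. r i k * \<alpha>h i k) + \<epsilon> * (\<Sum>i\<in>R. cost G d Xh i)"
  proof (rule market_dual[OF finR fin(2,3) HG])
    show "\<forall>i\<in>R. \<forall>k\<in>C. (\<Sum>j\<in>G. a i j k * Xh i j) \<ge> r i k" using XhCC RA unfolding CC_def by auto
    show "\<forall>i\<in>R. \<forall>j\<in>G. Xh i j \<ge> 0" using Xhnn RA by auto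
    show "\<forall>j\<in>H. (\<Sum>i\<in>R. Xh i j) \<le> 1" using sR_le HG by auto
    show "\<forall>x. (\<forall>i\<in>R. \<forall>k\<in>C. (\<Sum>j\<in>G. a i j k * x i j) \<ge> r i k) \<longrightarrow> (\<forall>i\<in>R. \<forall>j\<in>G. x i j \<ge> 0)
      \<longrightarrow> (\<forall>j\<in>H. (\<Sum>i\<in>R. x i j) \<le> 1) \<longrightarrow>
      (\<Sum>i\<in>R. \<Sum>j\<in>G. ((lam i + \<epsilon>) * d i j + ph j) * x i j) \<ge>
        (\<Sum>i\<in>R. \<Sum>k\<in>C. r i k * \<alpha>h i k) + \<epsilon> * (\<Sum>i\<in>R. cost G d Xh i)"
    proof (intro allI impI)
      fix x assume h1: "\<forall>i\<in>R. \<forall>k\<in>C. (\<Sum>j\<in>G. a i j k * x i j) \<ge> r i k"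
        and h2: "\<forall>i\<in>R. \<forall>j\<in>G. x i j \<ge> 0" and h3: "\<forall>j\<in>H. (\<Sum>i\<in>R. x i j) \<le> 1"
      have each: "(\<Sum>k\<in>C. r i k * \<alpha>h i k) \<le> (\<Sum>j\<in>G. (lam i * d i j + ph j) * x i j)" if i: "i \<in> R" for i
      proof (rule agent_wd[OF fin(2,3), where a = "\<lambda>j k. a i j k"])
        show "\<forall>k\<in>C. (\<Sum>j\<in>G. a i j k * x i j) \<ge> r i k" using h1 i by auto
        show "\<forall>j\<in>G. x i j \<ge> 0" using h2 i by auto
        show "\<forall>k\<in>C. \<alpha>h i k \<ge> 0" using dfeas i RA unfolding DLP_feasible_def by auto
        show "\<forall>j\<in>G. (\<Sum>k\<in>C. a i j k * \<alpha>h i k) \<le> lam i * d i j + ph j"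
          using dfeas i RA unfolding DLP_feasible_def by force
      qed
      have s1: "(\<Sum>i\<in>R. \<Sum>k\<in>C. r i k * \<alpha>h i k) \<le> (\<Sum>i\<in>R. \<Sum>j\<in>G. (lam i * d i j + ph j) * x i j)"
        using each by (rule sum_mono)
      have s2: "\<epsilon> * (\<Sum>i\<in>R. cost G d Xh i) \<le> \<epsilon> * (\<Sum>i\<in>R. \<Sum>j\<in>G. d i j * x i j)"
        using local[OF h1 h2 h3] eps_pos by simp
      have "(\<Sum>i\<in>R. \<Sum>j\<in>G. ((lam i + \<epsilon>) * d i j + ph j) * x i j) =
         (\<Sum>i\<in>R. \<Sum>j\<in>G. (lam i * d i j + ph j) * x i j) + \<epsilon> * (\<Sum>i\<in>R. \<Sum>j\<in>G. d i j * x i j)"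
        by (simp add: sum.distrib sum_distrib_left algebra_simps)
      then show "(\<Sum>i\<in>R. \<Sum>j\<in>G. ((lam i + \<epsilon>) * d i j + ph j) * x i j) \<ge>
        (\<Sum>i\<in>R. \<Sum>k\<in>C. r i k * \<alpha>h i k) + \<epsilon> * (\<Sum>i\<in>R. cost G d Xh i)"
        using s1 s2 by simp
    qed
  qed
  then obtain \<alpha>1 q1 where a1: "\<forall>i\<in>R. \<forall>k\<in>C. \<alpha>1 i k \<ge> 0" and q1: "\<forall>j\<in>H. q1 j \<ge> 0"
    and c1: "\<forall>i\<in>R. \<forall>j\<in>G. (\<Sum>k\<in>C. a i j k * \<alpha>1 i k) - (if j \<in> H then q1 j else 0) \<le> (lam i + \<epsilon>) * d i j + ph j"
    and o1: "(\<Sum>i\<in>R. \<Sum>k\<in>C. r i k * \<alpha>1 i k) - (\<Sum>j\<in>H. q1 j) \<ge>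
        (\<Sum>i\<in>R. \<Sum>k\<in>C. r i k * \<alpha>h i k) + \<epsilon> * (\<Sum>i\<in>R. cost G d Xh i)" by blast
  define \<alpha>' where "\<alpha>' = (\<lambda>i k. if i \<in> R then \<alpha>1 i k else \<alpha>h i k)"
  define p' where "p' = (\<lambda>j. ph j + (if j \<in> H then q1 j else 0))"
  have qnn: "(if j \<in> H then q1 j else 0) \<ge> 0" for j using q1 by auto
  have DF: "DLP_feasible A G C a d lam' \<alpha>' p'"
    unfolding DLP_feasible_def
  proof (intro conjI ballI)
    fix i j assume i: "i \<in> A" and j: "j \<in> G"
    show "lam' i * d i j \<ge> (\<Sum>k\<in>C. a i j k * \<alpha>' i k) - p' j"
    proof (cases "i \<in> R")
      case True
      then show ?thesis using c1 j unfolding lam'_def \<alpha>'_def p'_def by (force simp: algebra_simps)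
    next
      case False
      have "lam i * d i j \<ge> (\<Sum>k\<in>C. a i j k * \<alpha>h i k) - ph j" using dfeas i j unfolding DLP_feasible_def by auto
      then show ?thesis using False qnn[of j] unfolding lam'_def \<alpha>'_def p'_def by auto
    qed
  next
    fix i k assume "i \<in> A" "k \<in> C"
    then show "\<alpha>' i k \<ge> 0" using a1 dfeas unfolding \<alpha>'_def DLP_feasible_def by auto
  next
    fix j assume "j \<in> G"
    then show "p' j \<ge> 0" using dfeas qnn[of j] unfolding p'_def DLP_feasible_def by force
  qed
  have objeq: "DLP_obj A G C r \<alpha>' p' = DLP_obj A G C r \<alpha>h ph +
     ((\<Sum>i\<in>R. \<Sum>k\<in>C. r i k * \<alpha>1 i k) - (\<Sum>j\<in>H. q1 j)) - (\<Sum>i\<in>R. \<Sum>k\<in>C. r i k * \<alpha>h i k)"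
  proof -
    have e1: "(\<Sum>i\<in>A. \<Sum>k\<in>C. r i k * \<alpha>' i k) = (\<Sum>i\<in>A - R. \<Sum>k\<in>C. r i k * \<alpha>h i k) + (\<Sum>i\<in>R. \<Sum>k\<in>C. r i k * \<alpha>1 i k)"
      using splitA[of "\<lambda>i. \<Sum>k\<in>C. r i k * \<alpha>' i k"] unfolding \<alpha>'_def by simp
    have e2: "(\<Sum>i\<in>A. \<Sum>k\<in>C. r i k * \<alpha>h i k) = (\<Sum>i\<in>A - R. \<Sum>k\<in>C. r i k * \<alpha>h i k) + (\<Sum>i\<in>R. \<Sum>k\<in>C. r i k * \<alpha>h i k)"
      by (rule splitA)
    have e3: "(\<Sum>j\<in>G. p' j) = (\<Sum>j\<in>G. ph j) + (\<Sum>j\<in>H. q1 j)"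
      unfolding p'_def using sum_if_restrict[OF fin(2) HG, of q1] by (simp add: sum.distrib)
    show ?thesis unfolding DLP_obj_def using e1 e2 e3 by simp
  qed
  have DO: "DLP_optimal A G C a r d lam' \<alpha>' p'"
    unfolding DLP_optimal_def
  proof (intro conjI allI impI)
    show "DLP_feasible A G C a d lam' \<alpha>' p'" by (rule DF)
    fix \<beta> q assume "DLP_feasible A G C a d lam' \<beta> q"
    then have "DLP_obj A G C r \<beta> q \<le> LP_obj A G d lam' Xh" by (rule weak_duality[OF mkt XhF])
    also have "\<dots> = LP_obj A G d lam Xh + \<epsilon> * (\<Sum>i\<in>R. cost G d Xh i)" by (rule lamobj)
    also have "\<dots> \<le> DLP_obj A G C r \<alpha>' p'" using objeq o1 SD by simp
    finally show "DLP_obj A G C r \<beta> q \<le> DLP_obj A G C r \<alpha>' p'" .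
  qed
  have P2: "\<forall>j\<in>G. p' j \<ge> ph j" using qnn unfolding p'_def by auto
  have P3: "\<forall>j\<in>G. (\<Sum>i\<in>A - R. Xh i j) > 0 \<longrightarrow> p' j = ph j" unfolding p'_def H_def J0_def by auto
  have P4: "\<forall>i\<in>A - R. \<forall>k\<in>C. \<alpha>' i k = \<alpha>h i k" unfolding \<alpha>'_def by auto
  show ?thesis unfolding Let_def lam'_def[symmetric] using part1 DO P2 P3 P4 by blast
qed


end
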